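(* Let $f:\mathcal S\times\mathcal W\to\mathbb R$, $\Delta:\mathcal S\times\mathcal W\to\mathbb R^+$, $\hat{\mathcal W}$ an arbitrary set, $g:\mathcal S\times\hat{\mathcal W}\to\mathbb R$, $\epsilon\in\mathbb R$ and $\delta>0$. Then $$\log\mathbb P\big(f(S,W)>\Delta(S,W)\big)\le\max\Big(\log\delta,\ \sup_{\nu_{S,W}\in\mathcal F^\delta_{S,W}}\ \inf_{p_{\hat W|S}\in\mathcal Q(\nu_{S,W})}\ \inf_{\lambda\ge0}\Big\{-D_{KL}(\nu_{S,W}\|P_{S,W})-\lambda\Big(\mathbb E_{\nu_{S,W}}[\Delta(S,W)]-\epsilon-\mathbb E_{\nu_Sp_{\hat W|S}}[g(S,\hat W)]\Big)\Big\}\Big),$$ where the probability is over $(S,W)\sim P_{S,W}$, $\mathcal F^\delta_{S,W}:=\mathcal G^\delta_{S,W}\cap\mathcal S_{S,W}(f-\Delta)$, and $\mathcal Q(\nu_{S,W})$ is the set of conditionals $p_{\hat W|S}$ with $\mathbb E_{\nu_{S,W}p_{\hat W|S}}[\Delta(S,W)-g(S,\hat W)]\le\epsilon$.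
   Context: Setup: $S\sim P_S$ on $\mathcal S=\mathcal Z^n$, algorithm inducing $P_{W|S}$, $P_{S,W}$ on $\mathcal S\times\mathcal W$. Natural logs. $D_{KL}(Q\|P)=\mathbb E_Q[\log dQ/dP]$ if $Q\ll P$, else $\infty$. For a random variable $X$ with law $P_X$ and $h:\mathcal X\to\mathbb R$: $\mathcal G^\delta_X=\{\nu_X: D_{KL}(\nu_X\|P_X)\le\log(1/\delta)\}$, $\mathcal S_X(h)=\{\nu_X: h(x)>0\ \forall x\in\mathrm{supp}\,\nu_X\}$. $\nu_S$ is the $S$-marginal of $\nu_{S,W}$; an infimum over an empty set is $+\infty$. *)

theory Defs
  imports "HOL-Probability.Probability"
begin

definition elog :: "real \<Rightarrow> ereal" where
  "elog x = (if x \<le> 0 then -\<infinity> else ereal (ln x))"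

definition KL :: "'a measure \<Rightarrow> 'a measure \<Rightarrow> ereal" where
  "KL N M = (if absolutely_continuous M N then
      enn2ereal (\<integral>\<^sup>+ x. ennreal (max 0 (ln (enn2real (RN_deriv M N x)))) \<partial>N)
    - enn2ereal (\<integral>\<^sup>+ x. ennreal (max 0 (- ln (enn2real (RN_deriv M N x)))) \<partial>N)
   else \<infinity>)"

definition Gset :: "real \<Rightarrow> 'a measure \<Rightarrow> 'a measure set" where
  "Gset \<delta> P = {\<nu>. prob_space \<nu> \<and> sets \<nu> = sets P \<and> KL \<nu> P \<le> ereal (ln (1 / \<delta>))}"

text \<open>S_X(h): distributions nu_X with h > 0 on the support of nu_X
  (read as: h > 0 nu_X-almost everywhere).\<close>
definition Sset :: "'a measure \<Rightarrow> ('a \<Rightarrow> real) \<Rightarrow> 'a measure set" where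
  "Sset P h = {\<nu>. prob_space \<nu> \<and> sets \<nu> = sets P \<and> (AE x in \<nu>. h x > 0)}"

definition Fset :: "real \<Rightarrow> 'a measure \<Rightarrow> ('a \<Rightarrow> real) \<Rightarrow> ('a \<Rightarrow> real) \<Rightarrow> 'a measure set" where
  "Fset \<delta> P f \<Delta> = Gset \<delta> P \<inter> Sset P (\<lambda>x. f x - \<Delta> x)"

definition margS :: "'s measure \<Rightarrow> ('s \<times> 'w) measure \<Rightarrow> 's measure" where
  "margS XS \<nu> = distr \<nu> XS fst"

text \<open>Joint law nu_S p_{What|S} of (S, What).\<close>
definition jointS :: "'s measure \<Rightarrow> 'v measure \<Rightarrow> ('s \<times> 'w) measure \<Rightarrow> ('s \<Rightarrow> 'v measure)
    \<Rightarrow> ('s \<times> 'v) measure" where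
  "jointS XS XV \<nu> p = margS XS \<nu> \<bind> (\<lambda>s. distr (p s) (XS \<Otimes>\<^sub>M XV) (Pair s))"

text \<open>Joint law nu_{S,W} p_{What|S} of ((S, W), What).\<close>
definition jointSW :: "'v measure \<Rightarrow> ('s \<times> 'w) measure \<Rightarrow> ('s \<Rightarrow> 'v measure)
    \<Rightarrow> (('s \<times> 'w) \<times> 'v) measure" where
  "jointSW XV \<nu> p = \<nu> \<bind> (\<lambda>x. distr (p (fst x)) (\<nu> \<Otimes>\<^sub>M XV) (Pair x))"

text \<open>Q(nu_{S,W}): Markov kernels p_{What|S} (S -> probability measures on What) for which
  the expectations appearing in the statement exist (are finite) and
  E_{nu p}[Delta(S,W) - g(S,What)] <= epsilon.\<close>
definition Qset :: "'s measure \<Rightarrow> 'v measure \<Rightarrow> ('s \<times> 'w \<Rightarrow> real) \<Rightarrow> ('s \<times> 'v \<Rightarrow> real)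
    \<Rightarrow> real \<Rightarrow> ('s \<times> 'w) measure \<Rightarrow> ('s \<Rightarrow> 'v measure) set" where
  "Qset XS XV \<Delta> g \<epsilon> \<nu> = {p \<in> measurable XS (prob_algebra XV).
      integrable \<nu> \<Delta> \<and> integrable (jointS XS XV \<nu> p) g \<and>
      integrable (jointSW XV \<nu> p) (\<lambda>(x, v). \<Delta> x - g (fst x, v)) \<and>
      (\<integral>(x, v). \<Delta> x - g (fst x, v) \<partial>jointSW XV \<nu> p) \<le> \<epsilon>}"

end

theory Submission imports Defs begin

lemma Q_ident:
  fixes \<nu> :: "('s \<times> 'w) measure" and XV :: "'v measure" and \<Delta> :: "'s \<times> 'w \<Rightarrow> real" and g :: "'s \<times> 'v \<Rightarrow> real"
  assumes nu: "prob_space \<nu>" and sets_nu: "sets \<nu> = sets (XS \<Otimes>\<^sub>M XW)"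
    and p: "p \<in> measurable XS (prob_algebra XV)"
    and iD: "integrable \<nu> \<Delta>" and ig: "integrable (jointS XS XV \<nu> p) g"
  shows "(\<integral>(x, v). \<Delta> x - g (fst x, v) \<partial>jointSW XV \<nu> p) = (\<integral>x. \<Delta> x \<partial>\<nu>) - (\<integral>y. g y \<partial>jointS XS XV \<nu> p)"
proof -
  have ne: "space \<nu> \<noteq> {}" using nu prob_space.not_empty by blast
  have fstm: "fst \<in> measurable \<nu> XS"
    using measurable_cong_sets[OF sets_nu refl] by auto
  have ps: "p \<in> measurable XS (subprob_algebra XV)" using p by (rule measurable_prob_algebraD)
  have psp: "\<And>s. s \<in> space XS \<Longrightarrow> prob_space (p s) \<and> sets (p s) = sets XV"
    using measurable_space[OF p] by (auto simp: space_prob_algebra)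
  define K where "K x = distr (p (fst x)) (\<nu> \<Otimes>\<^sub>M XV) (Pair x)" for x
  have Km: "K \<in> measurable \<nu> (subprob_algebra (\<nu> \<Otimes>\<^sub>M XV))"
    unfolding K_def
    by (rule measurable_distr2[where M=XV]) (auto intro: measurable_compose[OF fstm ps])
  define K' where "K' s = distr (p s) (XS \<Otimes>\<^sub>M XV) (Pair s)" for s
  have K'm: "K' \<in> measurable XS (subprob_algebra (XS \<Otimes>\<^sub>M XV))"
    unfolding K'_def
    by (rule measurable_distr2[where M=XV]) (auto intro: ps)
  have JSW: "jointSW XV \<nu> p = \<nu> \<bind> K" unfolding jointSW_def K_def ..
  have JS: "jointS XS XV \<nu> p = distr \<nu> XS fst \<bind> K'" unfolding jointS_def margS_def K'_def ..
  have setsJSW: "sets (jointSW XV \<nu> p) = sets (\<nu> \<Otimes>\<^sub>M XV)"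
    unfolding JSW by (rule sets_bind_measurable[OF Km ne])
  have a: "distr (jointSW XV \<nu> p) \<nu> fst = \<nu>"
  proof -
    have "distr (jointSW XV \<nu> p) \<nu> fst = \<nu> \<bind> (\<lambda>x. distr (K x) \<nu> fst)"
      unfolding JSW by (rule distr_bind[OF Km ne]) simp
    also have "\<dots> = \<nu> \<bind> return \<nu>"
    proof (rule bind_cong[OF refl])
      fix x assume x: "x \<in> space \<nu>"
      then have fx: "fst x \<in> space XS" using measurable_space[OF fstm] by auto
      interpret P: prob_space "p (fst x)" using psp[OF fx] by (rule conjunct1)
      have m1: "Pair x \<in> measurable (p (fst x)) (\<nu> \<Otimes>\<^sub>M XV)"
        proof -
          have e: "measurable (p (fst x)) (\<nu> \<Otimes>\<^sub>M XV) = measurable XV (\<nu> \<Otimes>\<^sub>M XV)"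
            by (rule measurable_cong_sets[OF conjunct2[OF psp[OF fx]] refl])
          show ?thesis unfolding e by (rule measurable_Pair1'[OF x])
        qed
      have m2: "fst \<in> measurable (\<nu> \<Otimes>\<^sub>M XV) \<nu>" by (rule measurable_fst)
      have c: "fst \<circ> Pair x = (\<lambda>v. x)" by auto
      have "distr (K x) \<nu> fst = distr (p (fst x)) \<nu> (\<lambda>v. x)"
        unfolding K_def distr_distr[OF m2 m1] c ..
      also have "\<dots> = return \<nu> x" by (rule P.distr_const[OF x])
      finally show "distr (K x) \<nu> fst = return \<nu> x" .
    qed
    also have "\<dots> = \<nu>" by (rule bind_return'') simp
    finally show ?thesis .
  qed
  define h where "h = (\<lambda>(x::'s \<times> 'w, v::'v). (fst x, v))"
  have hm: "h \<in> measurable (\<nu> \<Otimes>\<^sub>M XV) (XS \<Otimes>\<^sub>M XV)"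
    unfolding h_def using fstm by measurable
  have b: "distr (jointSW XV \<nu> p) (XS \<Otimes>\<^sub>M XV) h = jointS XS XV \<nu> p"
  proof -
    have "distr (jointSW XV \<nu> p) (XS \<Otimes>\<^sub>M XV) h = \<nu> \<bind> (\<lambda>x. distr (K x) (XS \<Otimes>\<^sub>M XV) h)"
      unfolding JSW by (rule distr_bind[OF Km ne hm])
    also have "\<dots> = \<nu> \<bind> (\<lambda>x. K' (fst x))"
    proof (rule bind_cong[OF refl])
      fix x assume x: "x \<in> space \<nu>"
      then have fx: "fst x \<in> space XS" using measurable_space[OF fstm] by auto
      show "distr (K x) (XS \<Otimes>\<^sub>M XV) h = K' (fst x)"
      proof -
        have m1: "Pair x \<in> measurable (p (fst x)) (\<nu> \<Otimes>\<^sub>M XV)"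
          proof -
          have e: "measurable (p (fst x)) (\<nu> \<Otimes>\<^sub>M XV) = measurable XV (\<nu> \<Otimes>\<^sub>M XV)"
            by (rule measurable_cong_sets[OF conjunct2[OF psp[OF fx]] refl])
          show ?thesis unfolding e by (rule measurable_Pair1'[OF x])
        qed
        have c: "h \<circ> Pair x = Pair (fst x)" by (auto simp: h_def)
        show ?thesis unfolding K_def K'_def distr_distr[OF hm m1] c ..
      qed
    qed
    also have "\<dots> = jointS XS XV \<nu> p"
      unfolding JS by (rule bind_distr[OF fstm K'm ne, symmetric])
    finally show ?thesis .
  qed
  have ne2: "space (distr \<nu> XS fst) \<noteq> {}" using ne measurable_space[OF fstm] by auto
  have setsJS: "sets (jointS XS XV \<nu> p) = sets (XS \<Otimes>\<^sub>M XV)"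
    unfolding JS using K'm by (intro sets_bind_measurable[OF _ ne2]) simp
  have Dm: "\<Delta> \<in> borel_measurable \<nu>" using iD by auto
  have gm: "g \<in> borel_measurable (XS \<Otimes>\<^sub>M XV)"
    using ig measurable_cong_sets[OF setsJS refl] by auto
  have fstm2: "fst \<in> measurable (jointSW XV \<nu> p) \<nu>"
    using measurable_cong_sets[OF setsJSW refl] by auto
  have hm2: "h \<in> measurable (jointSW XV \<nu> p) (XS \<Otimes>\<^sub>M XV)"
    using hm measurable_cong_sets[OF setsJSW refl] by auto
  have I1: "integrable (jointSW XV \<nu> p) (\<lambda>y. \<Delta> (fst y))"
    using iD a integrable_distr_eq[OF fstm2 Dm] by simp
  have E1: "(\<integral>y. \<Delta> (fst y) \<partial>jointSW XV \<nu> p) = (\<integral>x. \<Delta> x \<partial>\<nu>)"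
    using integral_distr[OF fstm2 Dm] a by simp
  have I2: "integrable (jointSW XV \<nu> p) (\<lambda>y. g (h y))"
    using ig b integrable_distr_eq[OF hm2 gm] by simp
  have E2: "(\<integral>y. g (h y) \<partial>jointSW XV \<nu> p) = (\<integral>y. g y \<partial>jointS XS XV \<nu> p)"
    using integral_distr[OF hm2 gm] b by simp
  have "(\<lambda>(x, v). \<Delta> x - g (fst x, v)) = (\<lambda>y. \<Delta> (fst y) - g (h y))"
    by (auto simp: h_def)
  then show ?thesis using I1 I2 E1 E2 by simp
qed

theorem lemma1:
  fixes XS :: "'s measure" and XW :: "'w measure" and XV :: "'v measure"
    and P :: "('s \<times> 'w) measure"
    and f \<Delta> :: "'s \<times> 'w \<Rightarrow> real" and g :: "'s \<times> 'v \<Rightarrow> real"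
    and \<epsilon> \<delta> :: real
  assumes "prob_space P"
    and "sets P = sets (XS \<Otimes>\<^sub>M XW)"
    and "f \<in> borel_measurable (XS \<Otimes>\<^sub>M XW)"
    and "\<Delta> \<in> borel_measurable (XS \<Otimes>\<^sub>M XW)"
    and "\<forall>x \<in> space (XS \<Otimes>\<^sub>M XW). 0 \<le> \<Delta> x"
    and "\<delta> > 0"
  shows "elog (measure P {x \<in> space P. f x > \<Delta> x})
     \<le> max (ereal (ln \<delta>))
          (SUP \<nu> \<in> Fset \<delta> P f \<Delta>. INF p \<in> Qset XS XV \<Delta> g \<epsilon> \<nu>. INF l \<in> {0::real..}.
              - KL \<nu> P - ereal l * ereal ((\<integral>x. \<Delta> x \<partial>\<nu>) - \<epsilon> - (\<integral>y. g y \<partial>jointS XS XV \<nu> p)))"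
proof -
  interpret P: prob_space P by fact
  define A where "A = {x \<in> space P. f x > \<Delta> x}"
  define pr where "pr = measure P A"
  have fm: "f \<in> borel_measurable P" and Dm: "\<Delta> \<in> borel_measurable P"
    using assms(3,4) measurable_cong_sets[OF assms(2) refl] by auto
  have Asets: "A \<in> sets P" unfolding A_def using fm Dm by measurable
  show ?thesis
  proof (cases "pr \<le> \<delta>")
    case True
    have "elog pr \<le> ereal (ln \<delta>)"
      using True assms(6) by (auto simp: elog_def)
    then show ?thesis unfolding pr_def A_def by (simp add: le_max_iff_disj)
  next
    case False
    then have prpos: "pr > 0" "pr > \<delta>" using assms(6) by auto
    have pr1: "pr \<le> 1" unfolding pr_def by simp
    have eA: "emeasure P A = ennreal pr" unfolding pr_def by (simp add: P.emeasure_eq_measure)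
    have eA0: "emeasure P A \<noteq> 0" "emeasure P A \<noteq> \<infinity>" using eA prpos by auto
    define \<nu> where "\<nu> = uniform_measure P A"
    have nu: "prob_space \<nu>" unfolding \<nu>_def by (rule prob_space_uniform_measure[OF eA0])
    have snu: "sets \<nu> = sets P" unfolding \<nu>_def by simp
    have KLv: "KL \<nu> P = ereal (ln (1 / pr))"
    proof -
      have dm: "(\<lambda>x. indicator A x / emeasure P A) \<in> borel_measurable P" using Asets by measurable
      have ac: "absolutely_continuous P \<nu>"
        unfolding \<nu>_def uniform_measure_def by (rule absolutely_continuousI_density[OF dm])
      have "AE x in P. indicator A x / emeasure P A = RN_deriv P \<nu> x"
        by (rule P.RN_deriv_unique[OF dm]) (simp add: \<nu>_def uniform_measure_def)
      then have "AE x in P. x \<in> A \<longrightarrow> RN_deriv P \<nu> x = ennreal (1 / pr)"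
      proof eventually_elim
        case (elim x)
        have "1 / ennreal pr = ennreal (1 / pr)" using divide_ennreal[of 1 pr] prpos by simp
        then show ?case using elim by (auto simp: eA)
      qed
      then have ae: "AE x in \<nu>. RN_deriv P \<nu> x = ennreal (1 / pr)"
        unfolding \<nu>_def by (rule AE_uniform_measureI[OF Asets])
      have l0: "0 \<le> ln (1 / pr)" using prpos pr1 by simp
      have z: "ennreal (- ln (1 / pr)) = 0" by (rule ennreal_neg) (use l0 in linarith)
      have er: "enn2real (ennreal (1 / pr)) = 1 / pr" using prpos by simp
      have I1: "(\<integral>\<^sup>+ x. ennreal (max 0 (ln (enn2real (RN_deriv P \<nu> x)))) \<partial>\<nu>) = ennreal (ln (1 / pr))"
      proof -
        have "(\<integral>\<^sup>+ x. ennreal (max 0 (ln (enn2real (RN_deriv P \<nu> x)))) \<partial>\<nu>) = (\<integral>\<^sup>+ x. ennreal (ln (1 / pr)) \<partial>\<nu>)"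
          using ae by (intro nn_integral_cong_AE) (auto simp: l0 er)
        also have "\<dots> = ennreal (ln (1 / pr))"
          using prob_space.emeasure_space_1[OF nu] by simp
        finally show ?thesis .
      qed
      have I2: "(\<integral>\<^sup>+ x. ennreal (max 0 (- ln (enn2real (RN_deriv P \<nu> x)))) \<partial>\<nu>) = 0"
      proof -
        have "(\<integral>\<^sup>+ x. ennreal (max 0 (- ln (enn2real (RN_deriv P \<nu> x)))) \<partial>\<nu>) = (\<integral>\<^sup>+ x. 0 \<partial>\<nu>)"
        proof (rule nn_integral_cong_AE)
          have z': "max 0 (- ln (1 / pr)) = 0" using l0 by simp
          show "AE x in \<nu>. ennreal (max 0 (- ln (enn2real (RN_deriv P \<nu> x)))) = 0"
            using ae
          proof eventually_elim
            case (elim x)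
            show ?case by (simp only: elim er z' ennreal_0)
          qed
        qed
        then show ?thesis by simp
      qed
      show ?thesis unfolding KL_def using ac I1 I2 l0 by (simp add: zero_ennreal.rep_eq)
    qed
    have inF: "\<nu> \<in> Fset \<delta> P f \<Delta>"
    proof -
      have "ln (1 / pr) \<le> ln (1 / \<delta>)" using prpos assms(6) by (simp add: ln_div)
      moreover have "AE x in \<nu>. f x - \<Delta> x > 0"
        unfolding \<nu>_def by (rule AE_uniform_measureI[OF Asets]) (auto simp: A_def)
      ultimately show ?thesis
        unfolding Fset_def Gset_def Sset_def using nu snu KLv by auto
    qed
    have "ereal (ln pr) \<le> (INF p \<in> Qset XS XV \<Delta> g \<epsilon> \<nu>. INF l \<in> {0::real..}.
              - KL \<nu> P - ereal l * ereal ((\<integral>x. \<Delta> x \<partial>\<nu>) - \<epsilon> - (\<integral>y. g y \<partial>jointS XS XV \<nu> p)))"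
    proof (intro INF_greatest)
      fix p l assume p: "p \<in> Qset XS XV \<Delta> g \<epsilon> \<nu>" and l: "l \<in> {0::real..}"
      have "(\<integral>x. \<Delta> x \<partial>\<nu>) - (\<integral>y. g y \<partial>jointS XS XV \<nu> p) \<le> \<epsilon>"
        using p Q_ident[OF nu snu[unfolded assms(2)], of p XV \<Delta> g] unfolding Qset_def by auto
      then have c: "l * ((\<integral>x. \<Delta> x \<partial>\<nu>) - \<epsilon> - (\<integral>y. g y \<partial>jointS XS XV \<nu> p)) \<le> 0"
        using l by (simp add: mult_nonneg_nonpos)
      have "ln pr = - ln (1 / pr)" using prpos by (simp add: ln_div)
      then show "ereal (ln pr) \<le> - KL \<nu> P - ereal l * ereal ((\<integral>x. \<Delta> x \<partial>\<nu>) - \<epsilon> - (\<integral>y. g y \<partial>jointS XS XV \<nu> p))"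
        using c unfolding KLv by simp
    qed
    also have "\<dots> \<le> (SUP \<nu> \<in> Fset \<delta> P f \<Delta>. INF p \<in> Qset XS XV \<Delta> g \<epsilon> \<nu>. INF l \<in> {0::real..}.
              - KL \<nu> P - ereal l * ereal ((\<integral>x. \<Delta> x \<partial>\<nu>) - \<epsilon> - (\<integral>y. g y \<partial>jointS XS XV \<nu> p)))"
      by (rule SUP_upper[OF inF])
    finally have "elog pr \<le> (SUP \<nu> \<in> Fset \<delta> P f \<Delta>. INF p \<in> Qset XS XV \<Delta> g \<epsilon> \<nu>. INF l \<in> {0::real..}.
              - KL \<nu> P - ereal l * ereal ((\<integral>x. \<Delta> x \<partial>\<nu>) - \<epsilon> - (\<integral>y. g y \<partial>jointS XS XV \<nu> p)))"
      using prpos by (simp add: elog_def)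
    then show ?thesis unfolding pr_def A_def by (simp add: le_max_iff_disj)
  qed
qed

end
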